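(* For every $v\in\Delta\setminus\mathcal C$, $\langle\nabla H(v),F(v)\rangle>0$; i.e. $H$ is a strict Lyapunov function for $F$ on $\Delta$.
   Context: Let $N\ge2$, $E=\{1,\dots,N\}$, $\alpha>1$, and let $A=(A_{i,j})_{i,j\le N}$ be a symmetric matrix with nonnegative entries, $A_{i,j}>0$ for $i\ne j$, and $\sum_j A_{i,j}$ independent of $i$. Let $\Delta=\{v\in\mathbb R_+^N:\ \sum_i v_i=1,\ v_i\le 3/4 \text{ whenever } A_{i,i}=0\}$. For $v\in\Delta$ let $v^\alpha=(v_1^\alpha,\dots,v_N^\alpha)$, $H(v)=\sum_{i,j}A_{i,j}v_i^\alpha v_j^\alpha$ (positive on $\Delta$; $\nabla H$ is its gradient computed from this formula) and $\pi_i(v)=v_i^\alpha(Av^\alpha)_i/H(v)$. Let $\imath$ be the nearest-point projection of $\{v:\sum_iv_i=1\}$ onto $\Delta$ and $F(v)=-v+\pi(\imath(v))$. The equilibrium set is $\mathcal C=\{v\in\Delta: F(v)=0\}$. *)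

theory Defs
  imports "HOL-Analysis.Analysis"
begin

definition vpow :: "real \<Rightarrow> real^'n \<Rightarrow> real^'n" where
  "vpow \<alpha> v = (\<chi> i. (v$i) powr \<alpha>)"

definition Hfun :: "real^'n^'n \<Rightarrow> real \<Rightarrow> real^'n \<Rightarrow> real" where
  "Hfun A \<alpha> v = (\<Sum>i\<in>UNIV. \<Sum>j\<in>UNIV. A$i$j * (v$i) powr \<alpha> * (v$j) powr \<alpha>)"

text \<open>Gradient of H, computed formally from the defining formula:
  dH/dv_k = alpha v_k^(alpha-1) sum_j (A_kj + A_jk) v_j^alpha.\<close>
definition gradH :: "real^'n^'n \<Rightarrow> real \<Rightarrow> real^'n \<Rightarrow> real^'n" where
  "gradH A \<alpha> v = (\<chi> k. \<alpha> * (v$k) powr (\<alpha> - 1) *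
       (\<Sum>j\<in>UNIV. (A$k$j + A$j$k) * (v$j) powr \<alpha>))"

definition piF :: "real^'n^'n \<Rightarrow> real \<Rightarrow> real^'n \<Rightarrow> real^'n" where
  "piF A \<alpha> v = (\<chi> i. (v$i) powr \<alpha> * (A *v vpow \<alpha> v)$i / Hfun A \<alpha> v)"

definition Delta :: "real^'n^'n \<Rightarrow> (real^'n) set" where
  "Delta A = {v. (\<forall>i. 0 \<le> v$i) \<and> (\<Sum>i\<in>UNIV. v$i) = 1 \<and>
                  (\<forall>i. A$i$i = 0 \<longrightarrow> v$i \<le> 3/4)}"

text \<open>Nearest-point projection onto Delta (used on the hyperplane sum v = 1).\<close>
definition iota :: "real^'n^'n \<Rightarrow> real^'n \<Rightarrow> real^'n" where
  "iota A v = closest_point (Delta A) v"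

definition Ffield :: "real^'n^'n \<Rightarrow> real \<Rightarrow> real^'n \<Rightarrow> real^'n" where
  "Ffield A \<alpha> v = - v + piF A \<alpha> (iota A v)"

definition Equil :: "real^'n^'n \<Rightarrow> real \<Rightarrow> (real^'n) set" where
  "Equil A \<alpha> = {v \<in> Delta A. Ffield A \<alpha> v = 0}"

end

theory Submission
  imports Defs
begin

theorem lemma3p2:
  fixes A :: "real^'n^'n" and \<alpha> :: real and v :: "real^'n"
  assumes "CARD('n) \<ge> 2"
    and "\<alpha> > 1"
    and "\<forall>i j. A$i$j = A$j$i"
    and "\<forall>i j. 0 \<le> A$i$j"
    and "\<forall>i j. i \<noteq> j \<longrightarrow> A$i$j > 0"
    and "\<forall>i j. (\<Sum>k\<in>UNIV. A$i$k) = (\<Sum>k\<in>UNIV. A$j$k)"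
    and "v \<in> Delta A - Equil A \<alpha>"
  shows "gradH A \<alpha> v \<bullet> Ffield A \<alpha> v > 0"
proof -
  have vD: "v \<in> Delta A" and nE: "v \<notin> Equil A \<alpha>" using assms(7) by auto
  have nn: "\<And>i. 0 \<le> v$i" and s1: "(\<Sum>i\<in>UNIV. v$i) = 1"
    and q: "\<And>i. A$i$i = 0 \<Longrightarrow> v$i \<le> 3/4" using vD unfolding Delta_def by auto
  have sym: "\<And>i j. A$i$j = A$j$i" using assms(3) by auto
  have Ann: "\<And>i j. 0 \<le> A$i$j" using assms(4) by auto
  define w where "w k = v$k powr \<alpha>" for k
  define u where "u k = (\<Sum>j\<in>UNIV. A$k$j * w j)" for k
  define H where "H = Hfun A \<alpha> v"
  define x where "x k = v$k powr (\<alpha> - 1) * u k" for k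
  have wnn: "\<And>k. 0 \<le> w k" unfolding w_def by simp
  have unn: "\<And>k. 0 \<le> u k" unfolding u_def using Ann wnn by (simp add: sum_nonneg)
  have vw: "v$k * v$k powr (\<alpha> - 1) = w k" for k
  proof (cases "v$k = 0")
    case True then show ?thesis unfolding w_def by simp
  next
    case False then have "v$k > 0" using nn[of k] by simp
    then show ?thesis unfolding w_def
      by (simp add: powr_mult_base)
  qed
  have Hsum: "H = (\<Sum>k\<in>UNIV. w k * u k)"
    unfolding H_def Hfun_def u_def w_def
    by (simp add: sum_distrib_left mult.commute mult.left_commute)
  have Hpos: "H > 0"
  proof -
    have "\<exists>i. v$i > 0"
    proof (rule ccontr)
      assume "\<not> (\<exists>i. v$i > 0)"
      then have "\<And>i. v$i = 0" using nn by (simp add: not_less order.antisym)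
      then show False using s1 by simp
    qed
    then obtain i where vi: "v$i > 0" by blast
    have termnn: "\<And>a b. 0 \<le> A$a$b * w a * w b" using Ann wnn by simp
    have "\<exists>j. A$i$j * w i * w j > 0"
    proof (cases "A$i$i = 0")
      case False
      then have "A$i$i > 0" using Ann[of i i] by simp
      moreover have "w i > 0" unfolding w_def using vi by simp
      ultimately show ?thesis by (intro exI[of _ i]) simp
    next
      case True
      then have "v$i \<le> 3/4" using q by simp
      have "(\<Sum>k\<in>UNIV. v$k) = v$i + (\<Sum>k\<in>UNIV-{i}. v$k)"
        by (simp add: sum.remove)
      then have "(\<Sum>k\<in>UNIV-{i}. v$k) > 0" using s1 \<open>v$i \<le> 3/4\<close> by simp
      then have "\<exists>j\<in>UNIV-{i}. v$j \<noteq> 0" by (metis (mono_tags) sum.neutral less_irrefl)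
      then obtain j where "j \<noteq> i" "v$j \<noteq> 0" by blast
      then have "v$j > 0" using nn[of j] by simp
      have "A$i$j > 0" using assms(5) \<open>j \<noteq> i\<close> by metis
      moreover have "w i > 0" "w j > 0" unfolding w_def using vi \<open>v$j>0\<close> by simp_all
      ultimately show ?thesis by (intro exI[of _ j]) simp
    qed
    then obtain j where pj: "A$i$j * w i * w j > 0" by blast
    have "A$i$j * w i * w j \<le> (\<Sum>b\<in>UNIV. A$i$b * w i * w b)"
      by (rule member_le_sum) (auto simp: termnn)
    also have "\<dots> \<le> (\<Sum>a\<in>UNIV. \<Sum>b\<in>UNIV. A$a$b * w a * w b)"
      by (rule member_le_sum[where f="\<lambda>a. \<Sum>b\<in>UNIV. A$a$b * w a * w b"])
         (auto intro: sum_nonneg termnn)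
    also have "\<dots> = H" unfolding H_def Hfun_def w_def by simp
    finally show ?thesis using pj by simp
  qed
  have iv: "iota A v = v" unfolding iota_def using vD by (simp add: closest_point_self)
  have Fk: "Ffield A \<alpha> v $ k = v$k * x k / H - v$k" for k
  proof -
    have "piF A \<alpha> v $ k = w k * u k / H"
      unfolding piF_def H_def w_def u_def
      by (simp add: matrix_vector_mult_def vpow_def)
    also have "\<dots> = v$k * x k / H" unfolding x_def using vw[of k]
      by (simp add: mult.assoc[symmetric])
    finally show ?thesis unfolding Ffield_def iv by simp
  qed
  have gk: "gradH A \<alpha> v $ k = 2 * \<alpha> * x k" for k
  proof -
    have "(\<Sum>j\<in>UNIV. (A$k$j + A$j$k) * v$j powr \<alpha>) = 2 * u k"
      unfolding u_def w_def using sym by (simp add: sum_distrib_left algebra_simps)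
    then show ?thesis unfolding gradH_def x_def by simp
  qed
  have vx: "(\<Sum>k\<in>UNIV. v$k * x k) = H"
    unfolding Hsum x_def using vw by (simp add: mult.assoc[symmetric])
  have eq: "gradH A \<alpha> v \<bullet> Ffield A \<alpha> v = (2*\<alpha>/H) * (\<Sum>k\<in>UNIV. v$k * (x k - H)^2)"
  proof -
    have "gradH A \<alpha> v \<bullet> Ffield A \<alpha> v = (\<Sum>k\<in>UNIV. 2*\<alpha>*x k * (v$k * x k / H - v$k))"
      by (simp add: inner_vec_def gk Fk)
    also have "\<dots> = (2*\<alpha>/H) * (\<Sum>k\<in>UNIV. v$k * x k * (x k - H))"
    proof -
      have t: "2*\<alpha>*a*(b*a/H - b) = 2*\<alpha>/H*(b*a*(a-H))" for a b
        using Hpos by (simp add: field_simps)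
      show ?thesis unfolding sum_distrib_left by (rule sum.cong) (rule refl, rule t)
    qed
    also have "(\<Sum>k\<in>UNIV. v$k * x k * (x k - H)) = (\<Sum>k\<in>UNIV. v$k * (x k - H)^2 + H * (v$k * x k) - H * H * v$k)"
      by (rule sum.cong) (auto simp: power2_eq_square algebra_simps)
    also have "\<dots> = (\<Sum>k\<in>UNIV. v$k * (x k - H)^2)"
      by (simp add: sum.distrib sum_subtractf sum_distrib_left[symmetric] vx s1)
    finally show ?thesis .
  qed
  have tnn: "\<And>k. 0 \<le> v$k * (x k - H)^2" using nn by simp
  have "(\<Sum>k\<in>UNIV. v$k * (x k - H)^2) > 0"
  proof (rule ccontr)
    assume "\<not> ?thesis"
    then have s0: "(\<Sum>k\<in>UNIV. v$k * (x k - H)^2) = 0" using sum_nonneg[of UNIV "\<lambda>k. v$k * (x k - H)^2"] tnn by auto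
    have z: "\<And>k. v$k * (x k - H)^2 = 0" using sum_nonneg_eq_0_iff[of UNIV "\<lambda>k. v$k * (x k - H)^2"] tnn s0 by simp
    have "\<forall>k. Ffield A \<alpha> v $ k = 0 $ k"
    proof
      fix k
      have "v$k = 0 \<or> x k = H" using z[of k] by simp
      then show "Ffield A \<alpha> v $ k = 0 $ k" using Fk[of k] Hpos by auto
    qed
    then have "Ffield A \<alpha> v = 0" by (simp add: vec_eq_iff)
    then show False using nE vD unfolding Equil_def by simp
  qed
  then show ?thesis unfolding eq using Hpos assms(2) by simp
qed

end
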